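(* Let $q=2^t$. Let $p$ be a point of $\ell_0$ and let $\ell,\ell'$ be two distinct lines of $L$, both different from $\ell_0$, each passing through $p$. Then $\chi_\ell+\chi_{\ell'}\in C(P,L_1)$.
   Context: Let $q$ be a prime power and $V$ a $4$-dimensional vector space over $\mathbb{F}_q$ with a nonsingular alternating bilinear form $(\cdot,\cdot)$ and symplectic basis $e_0,e_1,e_2,e_3$ with $(e_0,e_3)=(e_1,e_2)=1$. $P$ is the set of $1$-dimensional subspaces of $V$ (points), $L$ the set of totally isotropic $2$-dimensional subspaces (lines), with incidence by containment. $\ell_0=\langle e_0,e_1\rangle$, and $L_1$ is the set of lines sharing no point with $\ell_0$. $\mathbb{F}_2[P]$ is the $\mathbb{F}_2$-vector space of functions $P\to\mathbb{F}_2$; for a line $\ell$, $\chi_\ell\in\mathbb{F}_2[P]$ is its characteristic function (value $1$ exactly at the $q+1$ points of $\ell$). For a set $S$ of lines, $C(P,S)$ is the $\mathbb{F}_2$-span of $\{\chi_\ell:\ell\in S\}$ in $\mathbb{F}_2[P]$. *)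

theory Defs
  imports "HOL-Analysis.Analysis" "HOL-Library.Z2"
begin

text \<open>V = F_q^4 modelled as 'a^4 over a finite field 'a; the symplectic form with
  (e0,e3) = (e1,e2) = 1, where e_i is the i-th standard basis vector.\<close>

definition sympf :: "'a::field ^ 4 \<Rightarrow> 'a ^ 4 \<Rightarrow> 'a" where
  "sympf x y = x$0 * y$3 - x$3 * y$0 + x$1 * y$2 - x$2 * y$1"

definition ebasis :: "4 \<Rightarrow> 'a::field ^ 4" where
  "ebasis i = axis i 1"

definition pt :: "'a::field ^ 4 \<Rightarrow> ('a ^ 4) set" where
  "pt v = range (\<lambda>c. c *s v)"

definition span2 :: "'a::field ^ 4 \<Rightarrow> 'a ^ 4 \<Rightarrow> ('a ^ 4) set" where
  "span2 u w = {a *s u + b *s w | a b. True}"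

definition points :: "('a::field ^ 4) set set" where
  "points = {pt v | v. v \<noteq> 0}"

definition lines :: "('a::field ^ 4) set set" where
  "lines = {span2 u w | u w.
      (\<forall>a b. a *s u + b *s w = 0 \<longrightarrow> a = 0 \<and> b = 0) \<and>
      (\<forall>x\<in>span2 u w. \<forall>y\<in>span2 u w. sympf x y = 0)}"

definition ell0 :: "('a::field ^ 4) set" where
  "ell0 = span2 (ebasis 0) (ebasis 1)"

definition L1 :: "('a::field ^ 4) set set" where
  "L1 = {l \<in> lines. \<not> (\<exists>p\<in>points. p \<subseteq> l \<and> p \<subseteq> ell0)}"

text \<open>Characteristic function of a line, as an element of F_2[P] (zero off P).\<close>
definition chi :: "('a::field ^ 4) set \<Rightarrow> ('a ^ 4) set \<Rightarrow> bit" where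
  "chi l p = (if p \<in> points \<and> p \<subseteq> l then 1 else 0)"

text \<open>C(P,S): F_2-span of the characteristic functions of lines in S.\<close>
definition Cspan :: "('a::field ^ 4) set set \<Rightarrow> (('a ^ 4) set \<Rightarrow> bit) set" where
  "Cspan S = {f. \<exists>T\<subseteq>S. finite T \<and> f = (\<lambda>p. \<Sum>l\<in>T. chi l p)}"

end

theory Submission imports Defs begin

lemma idx4: "(i::4) = 0 \<or> i = 1 \<or> i = 2 \<or> i = 3"
  using exhaust_4[of i] by auto

lemma vec4_eq: "(x::'a^4) = y \<longleftrightarrow> x$0 = y$0 \<and> x$1 = y$1 \<and> x$2 = y$2 \<and> x$3 = y$3"
proof
  assume h: "x$0 = y$0 \<and> x$1 = y$1 \<and> x$2 = y$2 \<and> x$3 = y$3"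
  show "x = y" unfolding vec_eq_iff
  proof
    fix i :: 4
    from idx4[of i] h show "x$i = y$i" by auto
  qed
qed simp

lemma sympf_add_left: "sympf (x + y) z = sympf x z + sympf y z"
  by (simp add: sympf_def algebra_simps)
lemma sympf_add_right: "sympf z (x + y) = sympf z x + sympf z y"
  by (simp add: sympf_def algebra_simps)
lemma sympf_smult_left: "sympf (k *s x) y = k * sympf x y"
  by (simp add: sympf_def algebra_simps)
lemma sympf_smult_right: "sympf y (k *s x) = k * sympf y x"
  by (simp add: sympf_def algebra_simps)
lemma sympf_self: "sympf x x = 0"
  by (simp add: sympf_def algebra_simps)
lemma sympf_swap: "sympf y x = - sympf x y"
  by (simp add: sympf_def algebra_simps)
lemma sympf_zero_left: "sympf 0 x = 0" and sympf_zero_right: "sympf x 0 = 0"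
  by (simp_all add: sympf_def)
lemma sympf_diff_left: "sympf (x - y) z = sympf x z - sympf y z"
  by (simp add: sympf_def algebra_simps)
lemma sympf_diff_right: "sympf z (x - y) = sympf z x - sympf z y"
  by (simp add: sympf_def algebra_simps)
lemma sympf_neg_left: "sympf (- x) z = - sympf x z"
  by (simp add: sympf_def algebra_simps)
lemma sympf_neg_right: "sympf z (- x) = - sympf z x"
  by (simp add: sympf_def algebra_simps)
lemmas sympf_lin = sympf_diff_left sympf_diff_right sympf_neg_left sympf_neg_right sympf_add_left sympf_add_right sympf_smult_left sympf_smult_right sympf_self
  sympf_zero_left sympf_zero_right

lemma char2:
  assumes "CARD('a::{field,finite}) = 2 ^ t"
  shows "(1::'a) + 1 = 0"
proof -
  have "(\<Sum>x\<in>UNIV. x + 1) = (\<Sum>x\<in>UNIV. (x::'a))"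
    by (rule sum.reindex_bij_witness[of _ "\<lambda>x. x - 1" "\<lambda>x. x + 1"]) auto
  hence "of_nat CARD('a) = (0::'a)" by (simp add: sum.distrib)
  hence "(2::'a) ^ t = 0" using assms by simp
  thus ?thesis by simp
qed

lemma ell0_iff: "x \<in> (ell0::('a::field^4) set) \<longleftrightarrow> x$2 = 0 \<and> x$3 = 0"
proof
  assume "x \<in> ell0" thus "x$2 = 0 \<and> x$3 = 0"
    by (auto simp: ell0_def span2_def ebasis_def axis_def)
next
  assume h: "x$2 = 0 \<and> x$3 = 0"
  have "x = (x$0) *s ebasis 0 + (x$1) *s ebasis 1"
    using h by (simp add: vec4_eq ebasis_def axis_def)
  thus "x \<in> ell0" by (auto simp: ell0_def span2_def)
qed

lemma span2_closed:
  assumes "x \<in> span2 u w" "y \<in> span2 u w"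
  shows "k *s x + l *s y \<in> span2 u w"
proof -
  obtain a1 b1 where x: "x = a1 *s u + b1 *s w" using assms(1) by (auto simp: span2_def)
  obtain a2 b2 where y: "y = a2 *s u + b2 *s w" using assms(2) by (auto simp: span2_def)
  have "k *s x + l *s y = (k*a1 + l*a2) *s u + (k*b1 + l*b2) *s w"
    unfolding x y by (simp add: vec_eq_iff algebra_simps)
  thus ?thesis unfolding span2_def by blast
qed

lemma span2_gen: "u \<in> span2 u w" "w \<in> span2 u w"
proof -
  have "u = 1 *s u + 0 *s w" "w = 0 *s u + 1 *s w" by simp_all
  thus "u \<in> span2 u w" "w \<in> span2 u w" unfolding span2_def by blast+
qed

lemma span2_smult: "x \<in> span2 u w \<Longrightarrow> k *s x \<in> span2 u w"
  using span2_closed[of x u w x k 0] by simp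

lemma span2_add: "x \<in> span2 u w \<Longrightarrow> y \<in> span2 u w \<Longrightarrow> x + y \<in> span2 u w"
proof -
  assume "x \<in> span2 u w" "y \<in> span2 u w"
  hence "1 *s x + 1 *s y \<in> span2 u w" by (rule span2_closed)
  thus ?thesis by simp
qed

lemma pt_subset_iff: "pt v \<subseteq> span2 u w \<longleftrightarrow> v \<in> span2 u w"
proof
  assume "pt v \<subseteq> span2 u w"
  moreover have "v \<in> pt v" unfolding pt_def by (metis rangeI vector_smult_lid)
  ultimately show "v \<in> span2 u w" by blast
qed (auto simp: pt_def span2_smult)

lemma iso_span2:
  assumes "sympf u w = 0"
  shows "\<forall>x\<in>span2 u w. \<forall>y\<in>span2 u w. sympf x y = (0::'a::field)"
proof (intro ballI)
  fix x y assume "x \<in> span2 u w" "y \<in> span2 u w"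
  then obtain a1 b1 a2 b2 where "x = a1 *s u + b1 *s w" "y = a2 *s u + b2 *s w"
    by (auto simp: span2_def)
  moreover have "sympf w u = 0" using sympf_swap[of w u] assms by simp
  ultimately show "sympf x y = 0" using assms by (simp add: sympf_lin)
qed

lemma ell0_iso: "x \<in> ell0 \<Longrightarrow> y \<in> ell0 \<Longrightarrow> sympf x y = (0::'a::field)"
  using iso_span2[of "ebasis 0" "ebasis 1"]
  by (auto simp: ell0_def sympf_def ebasis_def axis_def)

definition comb :: "'a::field^4 \<Rightarrow> 'a^4 \<Rightarrow> 'a^4 \<Rightarrow> 'a^4 \<Rightarrow> 'a \<Rightarrow> 'a \<Rightarrow> 'a \<Rightarrow> 'a \<Rightarrow> 'a^4" where
  "comb a b c d x0 x1 x2 x3 = x0 *s a + x1 *s b + x2 *s c + x3 *s d"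

lemma cnt:
  fixes u w z r :: "'a::{field,finite}"
  assumes "\<not> (u = 0 \<and> w = 0 \<and> z = 0 \<and> r = 0)"
  shows "(\<Sum>t\<in>UNIV. if u = t*w \<and> z = t*r then (1::bit) else 0)
     = (if (w \<noteq> 0 \<or> r \<noteq> 0) \<and> u*r = w*z then 1 else 0)"
proof (cases "w = 0")
  case False
  have "\<And>t. (u = t*w \<and> z = t*r) \<longleftrightarrow> (t = u/w \<and> u*r = w*z)"
    using False by (auto simp: field_simps)
  hence "(\<Sum>t\<in>UNIV. if u = t*w \<and> z = t*r then (1::bit) else 0)
       = (\<Sum>t\<in>UNIV. if t = u/w then (if u*r = w*z then 1 else 0) else 0)"
    by (intro sum.cong) auto
  also have "\<dots> = (if u*r = w*z then 1 else 0)" by (simp add: sum.delta)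
  finally show ?thesis using False by simp
next
  case w: True
  show ?thesis
  proof (cases "r = 0")
    case False
    have "\<And>t. (u = t*w \<and> z = t*r) \<longleftrightarrow> (t = z/r \<and> u = 0)"
      using False w by (auto simp: field_simps)
    hence "(\<Sum>t\<in>UNIV. if u = t*w \<and> z = t*r then (1::bit) else 0)
         = (\<Sum>t\<in>UNIV. if t = z/r then (if u = 0 then 1 else 0) else 0)"
      by (intro sum.cong) auto
    also have "\<dots> = (if u = 0 then 1 else 0)" by (simp add: sum.delta)
    finally show ?thesis using False w by simp
  next
    case True
    have "(\<Sum>t\<in>UNIV. if u = t*w \<and> z = t*r then (1::bit) else 0) = 0"
      by (rule sum.neutral) (use assms w True in auto)
    thus ?thesis using w True by simp
  qed
qed

lemma bit_double: "(x::bit) + x = 0"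
  using bit_not_zero_iff[of x] by auto

lemma bitid:
  fixes y0 y1 y2 y3 :: "'a::field"
  shows "(if (y1 \<noteq> 0 \<or> y3 \<noteq> 0) \<and> y0*y3 = y1*y2 then 1 else 0)
     + (if (y2 \<noteq> 0 \<or> y3 \<noteq> 0) \<and> y0*y3 = y2*y1 then 1 else 0)
     = (if y1 = 0 \<and> y3 = 0 then 1 else 0) + (if y2 = 0 \<and> y3 = 0 then (1::bit) else 0)"
proof (cases "y3 = 0")
  case False
  have "y2*y1 = y1*y2" by (simp add: mult.commute)
  thus ?thesis using False by (simp add: bit_double)
next
  case True
  show ?thesis
    using True by (cases "y1 = 0"; cases "y2 = 0"; simp)
qed


lemma ell0_sub: "pt v \<subseteq> ell0 \<longleftrightarrow> v \<in> ell0"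
  unfolding ell0_def by (rule pt_subset_iff)

context
  fixes a b c d :: "'a::{field,finite}^4" and k :: 'a
  assumes two: "(1::'a) + 1 = 0"
    and ab: "sympf a b = 0" and ac: "sympf a c = 0" and bd: "sympf b d = 0" and cd: "sympf c d = 0"
    and ad: "sympf a d = k" and bc: "sympf b c = k" and k0: "k \<noteq> 0"
    and a0: "a \<in> ell0" and b0: "b \<notin> ell0" and c0: "c \<notin> ell0"
begin

lemma gram: "sympf b a = 0" "sympf c a = 0" "sympf d b = 0" "sympf d c = 0"
  "sympf d a = - k" "sympf c b = - k"
  using sympf_swap[of a b] sympf_swap[of a c] sympf_swap[of b d] sympf_swap[of c d]
    sympf_swap[of a d] sympf_swap[of b c] ab ac bd cd ad bc by simp_all

lemma comb_co:
  "sympf (comb a b c d x0 x1 x2 x3) d = x0 * k"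
  "sympf (comb a b c d x0 x1 x2 x3) c = x1 * k"
  "sympf (comb a b c d x0 x1 x2 x3) b = - (x2 * k)"
  "sympf (comb a b c d x0 x1 x2 x3) a = - (x3 * k)"
  by (simp_all add: comb_def sympf_lin ab ac bd cd ad bc gram)

lemma comb_inj:
  assumes e: "comb a b c d x0 x1 x2 x3 = comb a b c d y0 y1 y2 y3"
  shows "x0 = y0 \<and> x1 = y1 \<and> x2 = y2 \<and> x3 = y3"
proof -
  have "sympf (comb a b c d x0 x1 x2 x3) d = sympf (comb a b c d y0 y1 y2 y3) d"
    "sympf (comb a b c d x0 x1 x2 x3) c = sympf (comb a b c d y0 y1 y2 y3) c"
    "sympf (comb a b c d x0 x1 x2 x3) b = sympf (comb a b c d y0 y1 y2 y3) b"
    "sympf (comb a b c d x0 x1 x2 x3) a = sympf (comb a b c d y0 y1 y2 y3) a"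
    using e by simp_all
  hence "x0 * k = y0 * k" "x1 * k = y1 * k" "- (x2 * k) = - (y2 * k)" "- (x3 * k) = - (y3 * k)"
    by (simp_all only: comb_co)
  thus ?thesis using k0 by simp
qed

lemma comb_surj: "\<exists>x0 x1 x2 x3. v = comb a b c d x0 x1 x2 x3"
proof -
  define F where "F = (\<lambda>y::'a^4. comb a b c d (y$0) (y$1) (y$2) (y$3))"
  have "inj F"
  proof (rule injI)
    fix y z :: "'a^4" assume "F y = F z"
    hence "comb a b c d (y$0) (y$1) (y$2) (y$3) = comb a b c d (z$0) (z$1) (z$2) (z$3)"
      by (simp add: F_def)
    from comb_inj[OF this] show "y = z" by (simp add: vec4_eq)
  qed
  have fin: "finite (UNIV :: ('a^4) set)" by simp
  have "surj F" using finite_UNIV_inj_surj[OF fin] \<open>inj F\<close> by blast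
  from surjD[OF this, of v] obtain y where "v = F y" by blast
  thus ?thesis unfolding F_def by blast
qed

lemma comb_zero: "comb a b c d 0 0 0 0 = 0" by (simp add: comb_def)

lemma in_A: "comb a b c d x0 x1 x2 x3 \<in> span2 (t *s a + b) (t *s c + d) \<longleftrightarrow> x0 = t * x1 \<and> x2 = t * x3"
proof
  assume "comb a b c d x0 x1 x2 x3 \<in> span2 (t *s a + b) (t *s c + d)"
  then obtain s r where "comb a b c d x0 x1 x2 x3 = s *s (t *s a + b) + r *s (t *s c + d)"
    by (auto simp: span2_def)
  also have "\<dots> = comb a b c d (s*t) s (r*t) r" by (simp add: comb_def vec_eq_iff algebra_simps)
  finally have "x0 = s*t \<and> x1 = s \<and> x2 = r*t \<and> x3 = r" by (rule comb_inj)
  thus "x0 = t * x1 \<and> x2 = t * x3" by (simp add: mult.commute)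
next
  assume "x0 = t * x1 \<and> x2 = t * x3"
  hence "comb a b c d x0 x1 x2 x3 = x1 *s (t *s a + b) + x3 *s (t *s c + d)"
    by (simp add: comb_def vec_eq_iff algebra_simps)
  thus "comb a b c d x0 x1 x2 x3 \<in> span2 (t *s a + b) (t *s c + d)" unfolding span2_def by blast
qed

lemma in_B: "comb a b c d x0 x1 x2 x3 \<in> span2 (t *s a + c) (t *s b + d) \<longleftrightarrow> x0 = t * x2 \<and> x1 = t * x3"
proof
  assume "comb a b c d x0 x1 x2 x3 \<in> span2 (t *s a + c) (t *s b + d)"
  then obtain s r where "comb a b c d x0 x1 x2 x3 = s *s (t *s a + c) + r *s (t *s b + d)"
    by (auto simp: span2_def)
  also have "\<dots> = comb a b c d (s*t) (r*t) s r" by (simp add: comb_def vec_eq_iff algebra_simps)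
  finally have "x0 = s*t \<and> x1 = r*t \<and> x2 = s \<and> x3 = r" by (rule comb_inj)
  thus "x0 = t * x2 \<and> x1 = t * x3" by (simp add: mult.commute)
next
  assume "x0 = t * x2 \<and> x1 = t * x3"
  hence "comb a b c d x0 x1 x2 x3 = x2 *s (t *s a + c) + x3 *s (t *s b + d)"
    by (simp add: comb_def vec_eq_iff algebra_simps)
  thus "comb a b c d x0 x1 x2 x3 \<in> span2 (t *s a + c) (t *s b + d)" unfolding span2_def by blast
qed

lemma in_ac: "comb a b c d x0 x1 x2 x3 \<in> span2 a c \<longleftrightarrow> x1 = 0 \<and> x3 = 0"
proof
  assume "comb a b c d x0 x1 x2 x3 \<in> span2 a c"
  then obtain s r where "comb a b c d x0 x1 x2 x3 = s *s a + r *s c"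
    by (auto simp: span2_def)
  also have "\<dots> = comb a b c d s 0 r 0" by (simp add: comb_def)
  finally have "x0 = s \<and> x1 = 0 \<and> x2 = r \<and> x3 = 0" by (rule comb_inj)
  thus "x1 = 0 \<and> x3 = 0" by simp
next
  assume "x1 = 0 \<and> x3 = 0"
  hence "comb a b c d x0 x1 x2 x3 = x0 *s a + x2 *s c" by (simp add: comb_def)
  thus "comb a b c d x0 x1 x2 x3 \<in> span2 a c" unfolding span2_def by blast
qed

lemma in_ab: "comb a b c d x0 x1 x2 x3 \<in> span2 a b \<longleftrightarrow> x2 = 0 \<and> x3 = 0"
proof
  assume "comb a b c d x0 x1 x2 x3 \<in> span2 a b"
  then obtain s r where "comb a b c d x0 x1 x2 x3 = s *s a + r *s b"
    by (auto simp: span2_def)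
  also have "\<dots> = comb a b c d s r 0 0" by (simp add: comb_def)
  finally have "x0 = s \<and> x1 = r \<and> x2 = 0 \<and> x3 = 0" by (rule comb_inj)
  thus "x2 = 0 \<and> x3 = 0" by simp
next
  assume "x2 = 0 \<and> x3 = 0"
  hence "comb a b c d x0 x1 x2 x3 = x0 *s a + x1 *s b" by (simp add: comb_def)
  thus "comb a b c d x0 x1 x2 x3 \<in> span2 a b" unfolding span2_def by blast
qed


lemma A_L1: "span2 (t *s a + b) (t *s c + d) \<in> L1"
proof -
  let ?u = "t *s a + b" and ?w = "t *s c + d"
  have indep: "\<forall>s r. s *s ?u + r *s ?w = 0 \<longrightarrow> s = 0 \<and> r = 0"
  proof (intro allI impI)
    fix s r assume h: "s *s ?u + r *s ?w = 0"
    have "s *s ?u + r *s ?w = comb a b c d (s*t) s (r*t) r"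
      by (simp add: comb_def vec_eq_iff algebra_simps)
    with h comb_zero have "comb a b c d (s*t) s (r*t) r = comb a b c d 0 0 0 0" by simp
    from comb_inj[OF this] show "s = 0 \<and> r = 0" by simp
  qed
  have uw: "sympf ?u ?w = 0"
  proof -
    have "sympf ?u ?w = t * ((1 + 1) * k)"
      by (simp add: sympf_lin ac ad bc bd algebra_simps)
    thus ?thesis using two by simp
  qed
  have lin: "span2 ?u ?w \<in> lines" unfolding lines_def using indep iso_span2[OF uw] by blast
  have noint: "\<not> (\<exists>p\<in>points. p \<subseteq> span2 ?u ?w \<and> p \<subseteq> ell0)"
  proof
    assume "\<exists>p\<in>points. p \<subseteq> span2 ?u ?w \<and> p \<subseteq> ell0"
    then obtain v where v0: "v \<noteq> 0" and vA: "pt v \<subseteq> span2 ?u ?w" and vE: "pt v \<subseteq> ell0"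
      by (auto simp: points_def)
    have vA': "v \<in> span2 ?u ?w" using vA pt_subset_iff by blast
    have vE': "v \<in> ell0" using vE ell0_sub by blast
    obtain x0 x1 x2 x3 where v: "v = comb a b c d x0 x1 x2 x3" using comb_surj by blast
    have h: "x0 = t*x1 \<and> x2 = t*x3" using vA' unfolding v in_A .
    have "sympf v a = 0" using ell0_iso vE' a0 by blast
    hence x3: "x3 = 0" using comb_co(4)[of x0 x1 x2 x3] v k0 by simp
    with h have x2: "x2 = 0" by simp
    have x1: "x1 \<noteq> 0" using v0 v h x2 x3 comb_zero by auto
    have "b = (inverse x1) *s v + (- t) *s a" using v h x2 x3 x1
      by (simp add: comb_def vec_eq_iff field_simps)
    moreover have "(inverse x1) *s v + (- t) *s a \<in> ell0"
      using span2_closed vE' a0 unfolding ell0_def by blast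
    ultimately show False using b0 by simp
  qed
  show ?thesis unfolding L1_def using lin noint by blast
qed

lemma B_L1: "span2 (t *s a + c) (t *s b + d) \<in> L1"
proof -
  let ?u = "t *s a + c" and ?w = "t *s b + d"
  have indep: "\<forall>s r. s *s ?u + r *s ?w = 0 \<longrightarrow> s = 0 \<and> r = 0"
  proof (intro allI impI)
    fix s r assume h: "s *s ?u + r *s ?w = 0"
    have "s *s ?u + r *s ?w = comb a b c d (s*t) (r*t) s r"
      by (simp add: comb_def vec_eq_iff algebra_simps)
    with h comb_zero have "comb a b c d (s*t) (r*t) s r = comb a b c d 0 0 0 0" by simp
    from comb_inj[OF this] show "s = 0 \<and> r = 0" by simp
  qed
  have uw: "sympf ?u ?w = 0"
    by (simp add: sympf_lin ab ad cd gram algebra_simps)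
  have lin: "span2 ?u ?w \<in> lines" unfolding lines_def using indep iso_span2[OF uw] by blast
  have noint: "\<not> (\<exists>p\<in>points. p \<subseteq> span2 ?u ?w \<and> p \<subseteq> ell0)"
  proof
    assume "\<exists>p\<in>points. p \<subseteq> span2 ?u ?w \<and> p \<subseteq> ell0"
    then obtain v where v0: "v \<noteq> 0" and vA: "pt v \<subseteq> span2 ?u ?w" and vE: "pt v \<subseteq> ell0"
      by (auto simp: points_def)
    have vA': "v \<in> span2 ?u ?w" using vA pt_subset_iff by blast
    have vE': "v \<in> ell0" using vE ell0_sub by blast
    obtain x0 x1 x2 x3 where v: "v = comb a b c d x0 x1 x2 x3" using comb_surj by blast
    have h: "x0 = t*x2 \<and> x1 = t*x3" using vA' unfolding v in_B .
    have "sympf v a = 0" using ell0_iso vE' a0 by blast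
    hence x3: "x3 = 0" using comb_co(4)[of x0 x1 x2 x3] v k0 by simp
    with h have x1: "x1 = 0" by simp
    have x2: "x2 \<noteq> 0" using v0 v h x1 x3 comb_zero by auto
    have "c = (inverse x2) *s v + (- t) *s a" using v h x1 x3 x2
      by (simp add: comb_def vec_eq_iff field_simps)
    moreover have "(inverse x2) *s v + (- t) *s a \<in> ell0"
      using span2_closed vE' a0 unfolding ell0_def by blast
    ultimately show False using c0 by simp
  qed
  show ?thesis unfolding L1_def using lin noint by blast
qed

lemma core: "(\<lambda>x. chi (span2 a c) x + chi (span2 a b) x) \<in> Cspan L1"
proof -
  define A where "A = (\<lambda>t. span2 (t *s a + b) (t *s c + d))"
  define B where "B = (\<lambda>t. span2 (t *s a + c) (t *s b + d))"
  define T where "T = range A \<union> range B"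
  have TL: "T \<subseteq> L1" using A_L1 B_L1 by (auto simp: T_def A_def B_def)
  have fin: "finite T" by simp
  have memA: "comb a b c d s 1 0 0 \<in> A t \<longleftrightarrow> s = t" for s t
    unfolding A_def in_A by auto
  have memB: "comb a b c d s 1 0 0 \<notin> B t" for s t
    unfolding B_def in_B by auto
  have memB2: "comb a b c d s 0 1 0 \<in> B t \<longleftrightarrow> s = t" for s t
    unfolding B_def in_B by auto
  have injA: "inj A"
  proof (rule injI)
    fix s t assume "A s = A t"
    thus "s = t" using memA[of s s] memA[of s t] by simp
  qed
  have injB: "inj B"
  proof (rule injI)
    fix s t assume "B s = B t"
    thus "s = t" using memB2[of s s] memB2[of s t] by simp
  qed
  have disj: "range A \<inter> range B = {}"
  proof (rule ccontr)
    assume "range A \<inter> range B \<noteq> {}"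
    then obtain s t where "A s = B t" by blast
    thus False using memA[of s s] memB[of s t] by simp
  qed
  have eq: "chi (span2 a c) x + chi (span2 a b) x = (\<Sum>l\<in>T. chi l x)" for x
  proof -
    have "(\<Sum>l\<in>T. chi l x) = (\<Sum>l\<in>range A. chi l x) + (\<Sum>l\<in>range B. chi l x)"
      unfolding T_def by (rule sum.union_disjoint) (simp_all add: disj)
    also have "(\<Sum>l\<in>range A. chi l x) = (\<Sum>t\<in>UNIV. chi (A t) x)"
      by (simp add: sum.reindex[OF injA])
    also have "(\<Sum>l\<in>range B. chi l x) = (\<Sum>t\<in>UNIV. chi (B t) x)"
      by (simp add: sum.reindex[OF injB])
    finally have S: "(\<Sum>l\<in>T. chi l x) = (\<Sum>t\<in>UNIV. chi (A t) x) + (\<Sum>t\<in>UNIV. chi (B t) x)" .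
    show ?thesis
    proof (cases "x \<in> points")
      case False
      thus ?thesis unfolding S by (simp add: chi_def)
    next
      case True
      then obtain v where v0: "v \<noteq> 0" and x: "x = pt v" by (auto simp: points_def)
      obtain y0 y1 y2 y3 where v: "v = comb a b c d y0 y1 y2 y3" using comb_surj by blast
      have nz: "\<not> (y0 = 0 \<and> y1 = 0 \<and> y2 = 0 \<and> y3 = 0)" using v0 v comb_zero by auto
      have nz2: "\<not> (y0 = 0 \<and> y2 = 0 \<and> y1 = 0 \<and> y3 = 0)" using nz by auto
      have cA: "chi (A t) x = (if y0 = t*y1 \<and> y2 = t*y3 then 1 else 0)" for t
        using True unfolding chi_def x pt_subset_iff A_def v in_A by simp
      have cB: "chi (B t) x = (if y0 = t*y2 \<and> y1 = t*y3 then 1 else 0)" for t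
        using True unfolding chi_def x pt_subset_iff B_def v in_B by simp
      have c1: "chi (span2 a c) x = (if y1 = 0 \<and> y3 = 0 then 1 else 0)"
        using True unfolding chi_def x pt_subset_iff v in_ac by simp
      have c2: "chi (span2 a b) x = (if y2 = 0 \<and> y3 = 0 then 1 else 0)"
        using True unfolding chi_def x pt_subset_iff v in_ab by simp
      show ?thesis unfolding S cA cB c1 c2 cnt[OF nz] cnt[OF nz2]
        by (rule bitid[symmetric])
    qed
  qed
  show ?thesis unfolding Cspan_def using TL fin eq by (intro CollectI exI[of _ T]) auto
qed

end


definition indep :: "'a::field^4 \<Rightarrow> 'a^4 \<Rightarrow> bool" where
  "indep u w \<longleftrightarrow> (\<forall>s r. s *s u + r *s w = 0 \<longrightarrow> s = 0 \<and> r = 0)"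

lemma card_span2:
  fixes u w :: "'a::{field,finite}^4"
  assumes "indep u w"
  shows "card (span2 u w) = CARD('a) * CARD('a)"
proof -
  let ?f = "\<lambda>(s::'a, r::'a). s *s u + r *s w"
  have im: "span2 u w = ?f ` UNIV" unfolding span2_def by auto
  have "inj ?f"
  proof (rule injI)
    fix x y :: "'a \<times> 'a" assume h: "?f x = ?f y"
    obtain s1 r1 s2 r2 where x: "x = (s1, r1)" and y: "y = (s2, r2)" by (cases x, cases y)
    have "(s1 - s2) *s u + (r1 - r2) *s w = 0"
      using h unfolding x y by (simp add: vec_eq_iff algebra_simps)
    thus "x = y" using assms unfolding indep_def x y by fastforce
  qed
  hence "card (?f ` UNIV) = card (UNIV :: ('a \<times> 'a) set)" by (rule card_image)
  thus ?thesis unfolding im UNIV_Times_UNIV[symmetric] card_cartesian_product .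
qed


lemma span2_eq:
  fixes u w :: "'a::{field,finite}^4"
  assumes "indep u w" "indep u' w'" "span2 u w \<subseteq> span2 u' w'"
  shows "span2 u w = span2 u' w'"
  using card_span2[OF assms(1)] card_span2[OF assms(2)] assms(3)
  by (intro card_subset_eq) simp_all

lemma span2_sub:
  assumes "x \<in> span2 u w" "y \<in> span2 u w"
  shows "span2 x y \<subseteq> span2 u w"
  using span2_closed[OF assms] unfolding span2_def[of x y] by blast

lemma pick:
  fixes u w v :: "'a::{field,finite}^4"
  assumes iu: "indep u w" and vin: "v \<in> span2 u w" and v0: "v \<noteq> 0"
  shows "\<exists>c. span2 u w = span2 v c \<and> indep v c \<and> c \<in> span2 u w"
proof -
  obtain x y where v: "v = x *s u + y *s w" using vin unfolding span2_def by blast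
  show ?thesis
  proof (cases "y = 0")
    case False
    have ind: "indep v u" unfolding indep_def
    proof (intro allI impI)
      fix s r assume "s *s v + r *s u = 0"
      hence "(s*x + r) *s u + (s*y) *s w = 0" unfolding v by (simp add: vec_eq_iff algebra_simps)
      hence "s*x + r = 0 \<and> s*y = 0" using iu unfolding indep_def by blast
      thus "s = 0 \<and> r = 0" using False by auto
    qed
    have "span2 v u \<subseteq> span2 u w" using span2_sub vin span2_gen by blast
    hence "span2 v u = span2 u w" using span2_eq ind iu by blast
    thus ?thesis using ind span2_gen by metis
  next
    case True
    hence x: "x \<noteq> 0" using v0 v by auto
    have ind: "indep v w" unfolding indep_def
    proof (intro allI impI)
      fix s r assume "s *s v + r *s w = 0"
      hence "(s*x) *s u + r *s w = 0" unfolding v using True by (simp add: vec_eq_iff algebra_simps)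
      hence "s*x = 0 \<and> r = 0" using iu unfolding indep_def by blast
      thus "s = 0 \<and> r = 0" using x by simp
    qed
    have "span2 v w \<subseteq> span2 u w" using span2_sub vin span2_gen by blast
    hence "span2 v w = span2 u w" using span2_eq ind iu by blast
    thus ?thesis using ind span2_gen by metis
  qed
qed

lemma par_lemma:
  fixes al be x y :: "'a::field"
  assumes "al * y = be * x" "al \<noteq> 0 \<or> be \<noteq> 0"
  shows "\<exists>k. x = k * al \<and> y = k * be"
proof (cases "al = 0")
  case False
  have "y = (x / al) * be" using assms(1) False by (simp add: field_simps)
  thus ?thesis using False by (intro exI[of _ "x / al"]) simp
next
  case True
  hence "be \<noteq> 0" "x = 0" using assms by auto
  thus ?thesis using True by (intro exI[of _ "y / be"]) simp
qed

lemma indep_ell0: "indep (ebasis 0) (ebasis (1::4) :: 'a::field^4)"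
  unfolding indep_def by (simp add: vec4_eq ebasis_def axis_def)

lemma sympf_v: "v$2 = 0 \<Longrightarrow> v$3 = 0 \<Longrightarrow> sympf v x = v$0 * x$3 + v$1 * x$2"
  by (simp add: sympf_def)

lemma not_ell0_line:
  fixes v c :: "'a::{field,finite}^4"
  assumes "indep v c" "v \<in> ell0" "span2 v c \<noteq> ell0"
  shows "c \<notin> ell0"
proof
  assume "c \<in> ell0"
  hence "span2 v c \<subseteq> ell0" using assms(2) span2_sub unfolding ell0_def by blast
  thus False using span2_eq[OF assms(1) indep_ell0] assms(3) unfolding ell0_def by blast
qed


theorem lemma5:
  fixes t :: nat
    and p l l' :: "('a::{field,finite} ^ 4) set"
  assumes "CARD('a) = 2 ^ t"
    and "p \<in> points" and "p \<subseteq> ell0"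
    and "l \<in> lines" and "l' \<in> lines" and "l \<noteq> l'"
    and "l \<noteq> ell0" and "l' \<noteq> ell0"
    and "p \<subseteq> l" and "p \<subseteq> l'"
  shows "(\<lambda>x. chi l x + chi l' x) \<in> Cspan L1"
proof -
  have two: "(1::'a) + 1 = 0" using char2 assms(1) .
  have neg: "- x = x" for x :: 'a
  proof -
    have "x + x = (1 + 1) * x" by (simp add: algebra_simps)
    hence "x + x = 0" using two by simp
    thus ?thesis by (rule add.inverse_unique)
  qed
  obtain v where v0: "v \<noteq> 0" and p: "p = pt v" using assms(2) unfolding points_def by blast
  have vE: "v \<in> ell0" using assms(3) p ell0_sub by blast
  have v23: "v$2 = 0" "v$3 = 0" using vE ell0_iff by blast+
  define al be where "al = v$0" and "be = v$1"
  have ab0: "al \<noteq> 0 \<or> be \<noteq> 0" using v0 v23 unfolding al_def be_def by (auto simp: vec4_eq)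
  obtain u w where l: "l = span2 u w" and iu: "indep u w"
    and isol: "\<forall>x\<in>span2 u w. \<forall>y\<in>span2 u w. sympf x y = 0"
    using assms(4) unfolding lines_def indep_def by blast
  obtain u' w' where l': "l' = span2 u' w'" and iu': "indep u' w'"
    and isol': "\<forall>x\<in>span2 u' w'. \<forall>y\<in>span2 u' w'. sympf x y = 0"
    using assms(5) unfolding lines_def indep_def by blast
  have vl: "v \<in> span2 u w" using assms(9) p pt_subset_iff l by blast
  have vl': "v \<in> span2 u' w'" using assms(10) p pt_subset_iff l' by blast
  obtain c where lc: "span2 u w = span2 v c" and ivc: "indep v c" and cl: "c \<in> span2 u w"
    using pick[OF iu vl v0] by blast
  obtain b where lb: "span2 u' w' = span2 v b" and ivb: "indep v b" and bl: "b \<in> span2 u' w'"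
    using pick[OF iu' vl' v0] by blast
  have vc: "sympf v c = 0" using isol vl cl by blast
  have vb: "sympf v b = 0" using isol' vl' bl by blast
  have cE: "c \<notin> ell0" using not_ell0_line[OF ivc vE] lc l assms(7) by simp
  have bE: "b \<notin> ell0" using not_ell0_line[OF ivb vE] lb l' assms(8) by simp
  have "al * b$3 + be * b$2 = 0" using vb sympf_v[OF v23, of b] by (simp add: al_def be_def)
  hence "al * b$3 = - (be * b$2)" by (simp add: eq_neg_iff_add_eq_0)
  hence "al * b$3 = be * b$2" using neg[of "be * b$2"] by simp
  from par_lemma[OF this ab0] obtain kb where kb: "b$2 = kb * al" "b$3 = kb * be" by (elim exE conjE)
  have kb0: "kb \<noteq> 0"
  proof
    assume "kb = 0"
    hence "b$2 = 0 \<and> b$3 = 0" using kb by simp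
    hence "b \<in> ell0" using ell0_iff by blast
    thus False using bE by contradiction
  qed
  have "al * c$3 + be * c$2 = 0" using vc sympf_v[OF v23, of c] by (simp add: al_def be_def)
  hence "al * c$3 = - (be * c$2)" by (simp add: eq_neg_iff_add_eq_0)
  hence "al * c$3 = be * c$2" using neg[of "be * c$2"] by simp
  from par_lemma[OF this ab0] obtain kc where kc: "c$2 = kc * al" "c$3 = kc * be" by (elim exE conjE)
  define k where "k = sympf b c"
  have cb: "sympf c b = - k" unfolding k_def by (rule sympf_swap)
  have k0: "k \<noteq> 0"
  proof
    assume k0: "k = 0"
    define x where "x = kc *s b + (- kb) *s c"
    have x23: "x$2 = 0" "x$3 = 0" unfolding x_def using kb kc by (simp_all add: algebra_simps)
    have "sympf x b = 0" unfolding x_def using cb k0 by (simp add: sympf_lin)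
    moreover have "sympf x b = kb * (al * x$1 + be * x$0)"
      using x23 kb by (simp add: sympf_def algebra_simps)
    ultimately have "al * x$1 + be * x$0 = 0" using kb0 by simp
    hence "al * x$1 = - (be * x$0)" by (simp add: eq_neg_iff_add_eq_0)
    hence "al * x$1 = be * x$0" using neg[of "be * x$0"] by simp
    from par_lemma[OF this ab0] obtain mu where mu: "x$0 = mu * al" "x$1 = mu * be" by (elim exE conjE)
    have "x = mu *s v" using mu x23 v23 unfolding al_def be_def by (simp add: vec4_eq)
    hence "c = (kc / kb) *s b + (- (mu / kb)) *s v" using kb0 unfolding x_def
      by (simp add: vec_eq_iff field_simps)
    moreover have "(kc / kb) *s b + (- (mu / kb)) *s v \<in> span2 v b"
      by (rule span2_closed[OF span2_gen(2) span2_gen(1)])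
    ultimately have "c \<in> span2 v b" by simp
    hence "span2 v c \<subseteq> span2 v b" using span2_sub span2_gen by blast
    hence "span2 v c = span2 v b" using span2_eq ivc ivb by blast
    thus False using assms(6) l l' lc lb by simp
  qed
  define m :: "'a^4" where "m = (if al \<noteq> 0 then axis 3 1 else axis 2 1)"
  define eta where "eta = sympf v m"
  have eta0: "eta \<noteq> 0" using ab0 v23 unfolding eta_def m_def al_def be_def
    by (auto simp: sympf_def axis_def)
  define d0 where "d0 = m + (- (sympf m c / k)) *s b + (sympf m b / k) *s c"
  define d where "d = (k / eta) *s d0"
  have d0b: "sympf d0 b = 0" unfolding d0_def using cb k0 by (simp add: sympf_lin)
  have d0c: "sympf d0 c = 0" unfolding d0_def using k0 by (simp add: sympf_lin k_def)
  have vd0: "sympf v d0 = eta" unfolding d0_def eta_def using vb vc by (simp add: sympf_lin)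
  have bd: "sympf b d = 0" unfolding d_def using d0b sympf_swap[of d0 b] by (simp add: sympf_lin)
  have cd: "sympf c d = 0" unfolding d_def using d0c sympf_swap[of d0 c] by (simp add: sympf_lin)
  have vd: "sympf v d = k" unfolding d_def using vd0 eta0 by (simp add: sympf_lin)
  have bc: "sympf b c = k" unfolding k_def ..
  have "(\<lambda>x. chi (span2 v c) x + chi (span2 v b) x) \<in> Cspan L1"
    by (rule core[OF two vb vc bd cd vd bc k0 vE bE cE])
  thus ?thesis using l l' lc lb by simp
qed

end
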